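(* Let $n$ be a positive integer and let $A$ be a binary $n\times n$ matrix in which every row has weight at least $9$. Then there is a set $S$ of columns of $A$ with $|S|\le 0.49\,n$ such that, in the $n\times |S|$ submatrix of $A$ formed by the columns in $S$, every row has weight at least $2$.
   Context: A binary matrix has entries in $\{0,1\}$. The weight of a binary vector (row or column) is its number of $1$-entries. *)

theory Defs
  imports Complex_Main
begin

definition binary_matrix :: "nat \<Rightarrow> (nat \<Rightarrow> nat \<Rightarrow> nat) \<Rightarrow> bool" where
  "binary_matrix n A \<longleftrightarrow> (\<forall>i<n. \<forall>j<n. A i j \<in> {0, 1})"

definition row_weight_on :: "(nat \<Rightarrow> nat \<Rightarrow> nat) \<Rightarrow> nat set \<Rightarrow> nat \<Rightarrow> nat" where
  "row_weight_on A S i = card {j \<in> S. A i j = 1}"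

end

theory Submission
  imports Defs
begin

definition wt :: "nat set \<Rightarrow> nat set \<Rightarrow> nat" where
  "wt V T = 2 ^ card T * 3 ^ card (V - T)"

lemma wt_total:
  assumes "finite V"
  shows "(\<Sum>T\<in>Pow V. wt V T) = 5 ^ card V"
  using assms
proof (induction V rule: finite_induct)
  case empty
  then show ?case by (simp add: wt_def)
next
  case (insert x F)
  have disj: "Pow F \<inter> insert x ` Pow F = {}" using insert by auto
  have inj: "inj_on (insert x) (Pow F)" using insert unfolding inj_on_def by (metis PowD insert_ident subsetD)
  have a: "(\<Sum>T\<in>Pow F. wt (insert x F) T) = 3 * (\<Sum>T\<in>Pow F. wt F T)"
  proof -
    have "wt (insert x F) T = 3 * wt F T" if "T \<in> Pow F" for T
    proof -
      have "insert x F - T = insert x (F - T)" using that insert by auto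
      then have "card (insert x F - T) = Suc (card (F - T))" using insert by simp
      then show ?thesis by (simp add: wt_def)
    qed
    then show ?thesis by (simp add: sum_distrib_left)
  qed
  have b: "(\<Sum>T\<in>insert x ` Pow F. wt (insert x F) T) = 2 * (\<Sum>T\<in>Pow F. wt F T)"
  proof -
    have "wt (insert x F) (insert x T) = 2 * wt F T" if "T \<in> Pow F" for T
    proof -
      have "insert x F - insert x T = F - T" using that insert by auto
      moreover have "card (insert x T) = Suc (card T)" using that insert
        by (meson PowD card_insert_disjoint finite_subset subsetD)
      ultimately show ?thesis by (simp add: wt_def)
    qed
    then show ?thesis using inj by (simp add: sum.reindex sum_distrib_left)
  qed
  have "(\<Sum>T\<in>Pow (insert x F). wt (insert x F) T)
      = (\<Sum>T\<in>Pow F. wt (insert x F) T) + (\<Sum>T\<in>insert x ` Pow F. wt (insert x F) T)"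
    unfolding Pow_insert using insert disj by (intro sum.union_disjoint) auto
  also have "\<dots> = 5 * 5 ^ card F" using a b insert by simp
  finally show ?case using insert by simp
qed

lemma decomp:
  assumes "finite V" "R \<subseteq> V"
  shows "(\<Sum>T\<in>Pow V. wt V T * g (T \<inter> R)) = 5 ^ card (V - R) * (\<Sum>U\<in>Pow R. wt R U * g U)"
proof -
  have fR: "finite R" using assms finite_subset by blast
  have bij: "bij_betw (\<lambda>(U, X). U \<union> X) (Pow R \<times> Pow (V - R)) (Pow V)"
    by (rule bij_betw_byWitness[where f' = "\<lambda>T. (T \<inter> R, T - R)"]) (use assms in auto)
  have "(\<Sum>T\<in>Pow V. wt V T * g (T \<inter> R))
      = (\<Sum>p\<in>Pow R \<times> Pow (V - R). wt V ((\<lambda>(U, X). U \<union> X) p) * g (((\<lambda>(U, X). U \<union> X) p) \<inter> R))"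
    using sum.reindex_bij_betw[OF bij, symmetric] by simp
  also have "\<dots> = (\<Sum>(U, X)\<in>Pow R \<times> Pow (V - R). (wt R U * g U) * wt (V - R) X)"
  proof (rule sum.cong[OF refl], clarify)
    fix U X assume U: "U \<subseteq> R" and X: "X \<subseteq> V - R"
    have fU: "finite U" using U fR finite_subset by blast
    have fX: "finite X" using X assms finite_subset by blast
    have i: "(U \<union> X) \<inter> R = U" using U X by auto
    have c1: "card (U \<union> X) = card U + card X"
      using U X fU fX by (intro card_Un_disjoint) auto
    have e: "V - (U \<union> X) = (R - U) \<union> ((V - R) - X)" using U X assms by auto
    have c2: "card (V - (U \<union> X)) = card (R - U) + card ((V - R) - X)"
      unfolding e using fR assms by (intro card_Un_disjoint) auto
    show "wt V (U \<union> X) * g ((U \<union> X) \<inter> R) = wt R U * g U * wt (V - R) X"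
      unfolding wt_def i c1 c2 by (simp add: power_add algebra_simps)
  qed
  also have "\<dots> = (\<Sum>U\<in>Pow R. \<Sum>X\<in>Pow (V - R). (wt R U * g U) * wt (V - R) X)"
    by (rule sum.cartesian_product[symmetric])
  also have "\<dots> = (\<Sum>U\<in>Pow R. (wt R U * g U) * 5 ^ card (V - R))"
    using wt_total[of "V - R"] assms by (simp add: sum_distrib_left[symmetric])
  finally show ?thesis by (simp add: sum_distrib_left mult.commute)
qed

lemma card_sum:
  assumes "finite R"
  shows "(\<Sum>U\<in>Pow R. f (card U) :: nat) = (\<Sum>k\<le>card R. (card R choose k) * f k)"
proof -
  have "(\<Sum>U\<in>Pow R. f (card U)) = (\<Sum>k\<in>{..card R}. \<Sum>U\<in>{U\<in>Pow R. card U = k}. f (card U))"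
    using assms by (intro sum.group[symmetric]) (auto intro: card_mono)
  also have "\<dots> = (\<Sum>k\<le>card R. (card R choose k) * f k)"
  proof (rule sum.cong[OF refl])
    fix k
    have "(\<Sum>U\<in>{U\<in>Pow R. card U = k}. f (card U)) = (\<Sum>U\<in>{U\<in>Pow R. card U = k}. f k)"
      by (rule sum.cong) auto
    also have "\<dots> = card {U\<in>Pow R. card U = k} * f k" by simp
    also have "{U\<in>Pow R. card U = k} = {B. B \<subseteq> R \<and> card B = k}" by auto
    finally show "(\<Sum>U\<in>{U\<in>Pow R. card U = k}. f (card U)) = (card R choose k) * f k"
      using n_subsets[OF assms] by simp
  qed
  finally show ?thesis .
qed

lemma row_sum:
  assumes "finite R" "card R = 9"
  shows "(\<Sum>U\<in>Pow R. wt R U * (2 - card U)) = 2 * 3^9 + 18 * 3^8"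
proof -
  have "(\<Sum>U\<in>Pow R. wt R U * (2 - card U)) = (\<Sum>U\<in>Pow R. (\<lambda>k. 2^k * 3^(9 - k) * (2 - k)) (card U))"
    by (rule sum.cong[OF refl]) (use assms in \<open>auto simp: wt_def card_Diff_subset finite_subset\<close>)
  also have "\<dots> = (\<Sum>k\<le>9. (9 choose k) * (2^k * 3^(9 - k) * (2 - k)))"
    using card_sum[OF assms(1)] assms(2) by simp
  also have "\<dots> = 2 * 3^9 + 18 * 3^8"
  proof -
    have "(\<Sum>k\<le>9. (9 choose k) * (2^k * 3^(9 - k) * (2 - k))) = (\<Sum>k\<in>{..<2}. (9 choose k) * (2^k * 3^(9 - k) * (2 - k)))"
      by (rule sum.mono_neutral_right) auto
    also have "\<dots> = 2 * 3^9 + 18 * 3^8"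
      by (simp add: numeral_2_eq_2)
    finally show ?thesis .
  qed
  finally show ?thesis .
qed

lemma col_sum:
  assumes "finite V"
  shows "(\<Sum>T\<in>Pow V. wt V T * card T) = card V * (2 * 5 ^ (card V - 1))"
proof -
  have "(\<Sum>T\<in>Pow V. wt V T * card T) = (\<Sum>T\<in>Pow V. \<Sum>j\<in>V. wt V T * card (T \<inter> {j}))"
  proof (rule sum.cong[OF refl])
    fix T assume "T \<in> Pow V"
    have "(\<Sum>j\<in>V. card (T \<inter> {j})) = (\<Sum>j\<in>V. if j \<in> T then 1 else 0)"
      by (rule sum.cong) auto
    also have "\<dots> = card (V \<inter> T)" using assms by (simp add: sum.If_cases)
    also have "V \<inter> T = T" using \<open>T \<in> Pow V\<close> by auto
    finally have "card T = (\<Sum>j\<in>V. card (T \<inter> {j}))" by simp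
    then show "wt V T * card T = (\<Sum>j\<in>V. wt V T * card (T \<inter> {j}))"
      by (simp add: sum_distrib_left)
  qed
  also have "\<dots> = (\<Sum>j\<in>V. \<Sum>T\<in>Pow V. wt V T * card (T \<inter> {j}))"
    by (rule sum.swap)
  also have "\<dots> = (\<Sum>j\<in>V. 2 * 5 ^ (card V - 1))"
  proof (rule sum.cong[OF refl])
    fix j assume j: "j \<in> V"
    have "(\<Sum>T\<in>Pow V. wt V T * card (T \<inter> {j})) = 5 ^ card (V - {j}) * (\<Sum>U\<in>Pow {j}. wt {j} U * card U)"
      using decomp[OF assms, of "{j}" card] j by simp
    also have "(\<Sum>U\<in>Pow {j}. wt {j} U * card U) = 2"
      by (simp add: Pow_insert wt_def)
    finally show "(\<Sum>T\<in>Pow V. wt V T * card (T \<inter> {j})) = 2 * 5 ^ (card V - 1)"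
      using j assms by simp
  qed
  finally show ?thesis by simp
qed


theorem theorem3p1:
  fixes n :: nat and A :: "nat \<Rightarrow> nat \<Rightarrow> nat"
  assumes "n > 0"
    and "binary_matrix n A"
    and "\<forall>i<n. row_weight_on A {..<n} i \<ge> 9"
  shows "\<exists>S. S \<subseteq> {..<n} \<and> real (card S) \<le> 0.49 * real n
             \<and> (\<forall>i<n. row_weight_on A S i \<ge> 2)"
proof -
  define V where "V = {..<n}"
  have fV: "finite V" unfolding V_def by simp
  have cV: "card V = n" unfolding V_def by simp
  have "\<forall>i<n. \<exists>R. R \<subseteq> {j\<in>V. A i j = 1} \<and> card R = 9"
  proof (intro allI impI)
    fix i assume "i < n"
    then have "9 \<le> card {j\<in>V. A i j = 1}" using assms(3) unfolding row_weight_on_def V_def by auto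
    then show "\<exists>R. R \<subseteq> {j\<in>V. A i j = 1} \<and> card R = 9"
      by (meson obtain_subset_with_card_n)
  qed
  then obtain R where R: "\<And>i. i < n \<Longrightarrow> R i \<subseteq> {j\<in>V. A i j = 1} \<and> card (R i) = 9" by metis
  have RV: "R i \<subseteq> V" if "i < n" for i using R[OF that] by auto
  have fR: "finite (R i)" if "i < n" for i using RV[OF that] fV finite_subset by blast
  have n9: "n \<ge> 9" using R[of 0] assms(1) card_mono[OF fV RV[of 0]] cV by auto
  define cost where "cost T = card T + (\<Sum>i<n. 2 - card (T \<inter> R i))" for T
  have rowterm: "(\<Sum>T\<in>Pow V. wt V T * (2 - card (T \<inter> R i))) = 5 ^ (n - 9) * (2 * 3^9 + 18 * 3^8)"
    if "i < n" for i
  proof -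
    have "(\<Sum>T\<in>Pow V. wt V T * (2 - card (T \<inter> R i))) = 5 ^ card (V - R i) * (\<Sum>U\<in>Pow (R i). wt (R i) U * (2 - card U))"
      by (rule decomp[OF fV RV[OF that]])
    also have "\<dots> = 5 ^ (n - 9) * (2 * 3^9 + 18 * 3^8)"
    proof -
      have "card (V - R i) = n - 9" using card_Diff_subset[OF fR[OF that] RV[OF that]] R[OF that] cV by simp
      then show ?thesis by (simp only: row_sum[OF fR[OF that] conjunct2[OF R[OF that]]])
    qed
    finally show ?thesis .
  qed
  have total: "(\<Sum>T\<in>Pow V. wt V T * cost T) = n * (2 * 5 ^ (n - 1)) + n * (5 ^ (n - 9) * (2 * 3^9 + 18 * 3^8))"
  proof -
    have "(\<Sum>T\<in>Pow V. wt V T * cost T) = (\<Sum>T\<in>Pow V. wt V T * card T) + (\<Sum>T\<in>Pow V. \<Sum>i<n. wt V T * (2 - card (T \<inter> R i)))"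
      unfolding cost_def by (simp add: sum.distrib sum_distrib_left distrib_left)
    also have "(\<Sum>T\<in>Pow V. \<Sum>i<n. wt V T * (2 - card (T \<inter> R i))) = (\<Sum>i<n. \<Sum>T\<in>Pow V. wt V T * (2 - card (T \<inter> R i)))"
      by (rule sum.swap)
    also have "\<dots> = (\<Sum>i<n. 5 ^ (n - 9) * (2 * 3^9 + 18 * 3^8))"
      using rowterm by (intro sum.cong) auto
    finally show ?thesis using col_sum[OF fV] cV by simp
  qed
  have ineq: "100 * (n * (2 * 5 ^ (n - 1)) + n * (5 ^ (n - 9) * (2 * 3^9 + 18 * 3^8))) < 49 * n * 5 ^ n"
  proof -
    obtain m where m: "n = m + 9" using n9 by (metis add.commute le_add_diff_inverse)
    have e1: "n - 1 = m + 8" "n - 9 = m" using m by auto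
    have p8: "(5::nat) ^ (m + 8) = 390625 * 5 ^ m" by (simp add: power_add)
    have p9: "(5::nat) ^ n = 1953125 * 5 ^ m" unfolding m by (simp add: power_add)
    have k: "(2::nat) * 3^9 + 18 * 3^8 = 157464" by simp
    define x where "x = n * 5 ^ m"
    have x: "x > 0" unfolding x_def using assms(1) by simp
    have "100 * (n * (2 * 5 ^ (n - 1)) + n * (5 ^ (n - 9) * (2 * 3^9 + 18 * 3^8))) = 93871400 * x"
      unfolding e1 p8 k x_def by simp
    also have "\<dots> < 95703125 * x" using x by simp
    also have "\<dots> = 49 * n * 5 ^ n" unfolding p9 x_def by simp
    finally show ?thesis .
  qed
  have "\<exists>T\<in>Pow V. 100 * cost T \<le> 49 * n"
  proof (rule ccontr)
    assume "\<not> ?thesis"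
    then have lt: "\<And>T. T \<in> Pow V \<Longrightarrow> 49 * n < 100 * cost T" using not_le by blast
    have "(\<Sum>T\<in>Pow V. wt V T * (49 * n)) < (\<Sum>T\<in>Pow V. wt V T * (100 * cost T))"
      apply (rule sum_strict_mono)
      using fV apply simp
       apply blast
      using lt by (simp add: wt_def)
    also have "\<dots> = 100 * (\<Sum>T\<in>Pow V. wt V T * cost T)"
      by (simp add: sum_distrib_left mult.left_commute)
    finally have lt2: "(\<Sum>T\<in>Pow V. wt V T * (49 * n)) < 100 * (\<Sum>T\<in>Pow V. wt V T * cost T)" .
    have "(\<Sum>T\<in>Pow V. wt V T * (49 * n)) = 49 * n * 5 ^ n"
      by (simp add: sum_distrib_right[symmetric] wt_total[OF fV] cV)
    then have "49 * n * 5 ^ n < 100 * (\<Sum>T\<in>Pow V. wt V T * cost T)" using lt2 by simp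
    then show False using ineq total by simp
  qed
  then obtain T where T: "T \<subseteq> V" "100 * cost T \<le> 49 * n" by auto
  have fT: "finite T" using T fV finite_subset by blast
  have "\<forall>i<n. \<exists>F. F \<subseteq> R i - T \<and> card F = 2 - card (T \<inter> R i)"
  proof (intro allI impI)
    fix i assume i: "i < n"
    have "card (R i - T) = 9 - card (T \<inter> R i)"
      using card_Diff_subset_Int[of "R i" T] fR[OF i] R[OF i] by (simp add: Int_commute)
    then have "2 - card (T \<inter> R i) \<le> card (R i - T)" by simp
    then show "\<exists>F. F \<subseteq> R i - T \<and> card F = 2 - card (T \<inter> R i)"
      by (meson obtain_subset_with_card_n)
  qed
  then obtain F where F: "\<And>i. i < n \<Longrightarrow> F i \<subseteq> R i - T \<and> card (F i) = 2 - card (T \<inter> R i)" by metis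
  define S where "S = T \<union> (\<Union>i<n. F i)"
  have SV: "S \<subseteq> V" unfolding S_def using T F RV by blast
  have "card S \<le> card T + card (\<Union>i<n. F i)" unfolding S_def by (rule card_Un_le)
  also have "card (\<Union>i<n. F i) \<le> (\<Sum>i<n. card (F i))" by (rule card_UN_le) simp
  also have "(\<Sum>i<n. card (F i)) = (\<Sum>i<n. 2 - card (T \<inter> R i))" using F by simp
  finally have "card S \<le> cost T" unfolding cost_def by simp
  then have "100 * card S \<le> 49 * n" using T by simp
  then have c: "real (card S) \<le> 0.49 * real n" by simp
  have w: "row_weight_on A S i \<ge> 2" if i: "i < n" for i
  proof -
    have fin: "finite {j \<in> S. A i j = 1}" using finite_subset[OF SV fV] by simp
    have sub: "(T \<inter> R i) \<union> F i \<subseteq> {j \<in> S. A i j = 1}"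
      using R[OF i] F[OF i] i unfolding S_def by blast
    have fTR: "finite (T \<inter> R i)" using fT by simp
    have fF: "finite (F i)" using F[OF i] fR[OF i] finite_subset by blast
    have "card ((T \<inter> R i) \<union> F i) = card (T \<inter> R i) + card (F i)"
      using F[OF i] fTR fF by (intro card_Un_disjoint) auto
    also have "\<dots> \<ge> 2" using F[OF i] by simp
    finally show ?thesis unfolding row_weight_on_def using card_mono[OF fin sub] by simp
  qed
  show ?thesis using SV c w unfolding V_def by blast
qed

end
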